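(* Let $\mathbb{E},\mathbb{F}$ be Euclidean spaces, $A\colon\mathbb{E}\to\mathbb{F}$ linear, $b\in\operatorname{Range}A$, and $\mathcal{K}\subseteq\mathbb{E}$ a closed convex cone with nonempty interior. Define $$\operatorname{cond}:=\min_{y\in\mathbb{F}:\ \|y\|=1}\ \max\{\operatorname{dist}_{\mathcal{K}^*}(A^*y),\ \langle b,y\rangle\}.$$ Then $\operatorname{cond}\neq 0$ if and only if the Mangasarian-Fromovitz constraint qualification holds, i.e., $A$ is surjective and there exists $x$ in the interior of $\mathcal{K}$ with $Ax=b$.
   Context: $\mathcal{K}^*:=\{z\in\mathbb{E}:\langle x,z\rangle\ge 0\ \forall x\in\mathcal{K}\}$ is the dual cone, $A^*$ is the adjoint of $A$, and $\operatorname{dist}_{\mathcal{K}^*}(w)$ is the Euclidean distance from $w$ to $\mathcal{K}^*$. *)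

theory Defs
  imports "HOL-Analysis.Analysis"
begin

definition dual_cone :: "'a::real_inner set \<Rightarrow> 'a set" where
  "dual_cone K = {z. \<forall>x\<in>K. inner x z \<ge> 0}"

text \<open>Condition number: minimum over the unit sphere of
  max(dist_{K*}(A* y), <b,y>). The minimum is attained (continuous function on a
  compact nonempty sphere), so it is written as an infimum.\<close>
definition cond_num :: "('a::euclidean_space \<Rightarrow> 'b::euclidean_space) \<Rightarrow> 'b \<Rightarrow> 'a set \<Rightarrow> real" where
  "cond_num A b K = (INF y\<in>sphere 0 1. max (infdist (adjoint A y) (dual_cone K)) (inner b y))"

end

theory Submission
  imports Defs
begin

lemma closed_dual_cone: "closed (dual_cone K)"
proof -
  have "dual_cone K = (\<Inter>x\<in>K. {z. 0 \<le> x \<bullet> z})" unfolding dual_cone_def by auto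
  thus ?thesis by (simp add: closed_INT closed_halfspace_ge)
qed

lemma zero_dual_cone: "0 \<in> dual_cone K" unfolding dual_cone_def by auto


lemma cond_zero_if:
  fixes A :: "'a::euclidean_space \<Rightarrow> 'b::euclidean_space"
  assumes lin: "linear A" and y0: "y \<noteq> 0" and yd: "adjoint A y \<in> dual_cone K"
    and yb: "inner b y \<le> 0"
  shows "cond_num A b K = 0"
proof -
  define f where "f = (\<lambda>y. max (infdist (adjoint A y) (dual_cone K)) (inner b y))"
  define y' where "y' = (1 / norm y) *\<^sub>R y"
  have ny: "norm y > 0" using y0 by simp
  have y's: "y' \<in> sphere 0 1" using y0 by (simp add: y'_def dist_norm)
  have "adjoint A y' = (1 / norm y) *\<^sub>R adjoint A y"
    using adjoint_linear[OF lin] unfolding y'_def by (simp add: linear_cmul)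
  moreover have "adjoint A y \<in> dual_cone K" by fact
  ultimately have "adjoint A y' \<in> dual_cone K"
    using ny unfolding dual_cone_def by auto
  hence d0: "infdist (adjoint A y') (dual_cone K) = 0" by (rule infdist_zero)
  have "inner b y' = inner b y / norm y" by (simp add: y'_def)
  also have "\<dots> \<le> 0" using yb ny by (simp add: divide_nonpos_pos)
  finally have "f y' = 0" unfolding f_def using d0 by simp
  have bdd: "bdd_below (f ` sphere 0 1)"
    by (rule bdd_belowI[where m=0]) (auto simp: f_def infdist_nonneg le_max_iff_disj)
  have "(INF y\<in>sphere 0 1. f y) \<le> 0"
    using cINF_lower[OF bdd y's] \<open>f y' = 0\<close> by simp
  moreover have "(INF y\<in>sphere 0 1. f y) \<ge> 0"
    using y's by (intro cINF_greatest) (auto simp: f_def infdist_nonneg le_max_iff_disj)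
  ultimately show ?thesis unfolding cond_num_def f_def[symmetric] by simp
qed

theorem mainTheorem5:
  fixes A :: "'a::euclidean_space \<Rightarrow> 'b::euclidean_space"
    and b :: 'b and K :: "'a set"
  assumes "linear A"
    and "b \<in> range A"
    and "closed K" and "convex_cone K" and "interior K \<noteq> {}"
  shows "cond_num A b K \<noteq> 0 \<longleftrightarrow> (surj A \<and> (\<exists>x\<in>interior K. A x = b))"
proof
  assume c: "cond_num A b K \<noteq> 0"
  obtain x0 where x0: "b = A x0" using assms(2) by auto
  have sj: "surj A"
  proof (rule ccontr)
    assume ns: "\<not> surj A"
    have "span (range A) \<noteq> UNIV" using ns linear_span_image[OF assms(1), of UNIV] span_UNIV by metis
    hence "dim (range A) < DIM('b)" using dim_eq_full[of "range A"] dim_subset_UNIV[of "range A"] by linarith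
    then obtain y where y0: "y \<noteq> 0" and yo: "\<And>v. v \<in> span (range A) \<Longrightarrow> orthogonal y v"
      using orthogonal_to_subspace_exists by blast
    have yA: "\<And>x. A x \<bullet> y = 0"
      using yo span_base by (metis orthogonal_def inner_commute rangeI)
    have "adjoint A y \<bullet> adjoint A y = 0"
      using adjoint_works[OF assms(1)] yA by simp
    hence "adjoint A y = 0" by simp
    hence "adjoint A y \<in> dual_cone K" using zero_dual_cone by simp
    moreover have "inner b y \<le> 0" using yA x0 by simp
    ultimately have "cond_num A b K = 0" using cond_zero_if[OF assms(1) y0] by blast
    with c show False by simp
  qed
  have "\<exists>x\<in>interior K. A x = b"
  proof (rule ccontr)
    assume nx: "\<not> (\<exists>x\<in>interior K. A x = b)"
    have cvK: "convex K" using assms(4) by (simp add: convex_cone_def)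
    have "convex (A ` interior K)" using convex_linear_image[OF assms(1)] convex_interior[OF cvK] by blast
    moreover have "{b} \<inter> A ` interior K = {}" using nx by auto
    ultimately obtain y c where y0: "y \<noteq> 0" and yb: "y \<bullet> b \<le> c"
      and yK: "\<forall>v\<in>A ` interior K. c \<le> y \<bullet> v"
      using separating_hyperplane_sets[of "{b}" "A ` interior K"] assms(5) by auto
    define z where "z = adjoint A y"
    have zA: "\<And>x. x \<bullet> z = y \<bullet> A x"
      unfolding z_def using adjoint_works[OF assms(1)] by (simp add: inner_commute)
    have "interior K \<subseteq> {x. c \<le> z \<bullet> x}" using yK zA by (auto simp: inner_commute)
    hence "closure (interior K) \<subseteq> {x. c \<le> z \<bullet> x}"
      by (rule closure_minimal) (rule closed_halfspace_ge)
    hence Kc: "\<And>x. x \<in> K \<Longrightarrow> c \<le> x \<bullet> z"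
      using convex_closure_interior[OF cvK assms(5)] closure_closed[OF assms(3)]
      by (auto simp: inner_commute)
    have cone: "conic K" and ne: "K \<noteq> {}" using assms(4) by (auto simp: convex_cone_def)
    have zK: "0 \<in> K" using cone ne by (simp add: conic_contains_0)
    have c0: "c \<le> 0" using Kc[OF zK] by simp
    have "z \<in> dual_cone K"
      unfolding dual_cone_def
    proof (intro CollectI ballI)
      fix x assume xK: "x \<in> K"
      show "0 \<le> x \<bullet> z"
      proof (rule ccontr)
        assume neg: "\<not> 0 \<le> x \<bullet> z"
        define t where "t = (1 - c) / (- (x \<bullet> z))"
        have tpos: "t \<ge> 0" unfolding t_def using neg c0 by (intro divide_nonneg_pos) auto
        have "t *\<^sub>R x \<in> K" using cone xK tpos by (simp add: conic_def)
        hence "c \<le> t * (x \<bullet> z)" using Kc by fastforce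
        moreover have "t * (x \<bullet> z) = c - 1" using neg by (simp add: t_def field_simps)
        ultimately show False by simp
      qed
    qed
    moreover have "inner b y \<le> 0" using yb c0 by (simp add: inner_commute)
    ultimately have "cond_num A b K = 0" using cond_zero_if[OF assms(1) y0] z_def by blast
    with c show False by simp
  qed
  with sj show "surj A \<and> (\<exists>x\<in>interior K. A x = b)" by simp
next
  assume "surj A \<and> (\<exists>x\<in>interior K. A x = b)"
  then obtain x where sj: "surj A" and xK: "x \<in> interior K" and xb: "A x = b" by blast
  define f where "f = (\<lambda>y. max (infdist (adjoint A y) (dual_cone K)) (inner b y))"
  have blin: "bounded_linear (adjoint A)"
    using adjoint_linear[OF assms(1)] by (simp add: linear_conv_bounded_linear)
  have cont: "continuous_on (sphere 0 1) f" unfolding f_def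
    by (intro continuous_intros continuous_on_compose2[OF continuous_on_infdist[OF continuous_on_id]]
        bounded_linear.continuous_on[OF blin]) auto
  have sne: "sphere (0::'b) 1 \<noteq> {}" by simp
  obtain y0 where y0s: "y0 \<in> sphere 0 1" and ymin: "\<forall>y\<in>sphere 0 1. f y0 \<le> f y"
    using continuous_attains_inf[OF compact_sphere sne cont] by blast
  have bdd: "bdd_below (f ` sphere 0 1)"
    by (rule bdd_belowI[where m=0]) (auto simp: f_def infdist_nonneg le_max_iff_disj)
  have eq: "cond_num A b K = f y0"
    unfolding cond_num_def f_def[symmetric]
    using cINF_lower[OF bdd y0s] cINF_greatest[OF sne] ymin by (meson antisym)
  show "cond_num A b K \<noteq> 0"
  proof
    assume "cond_num A b K = 0"
    hence f0: "f y0 = 0" using eq by simp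
    define z where "z = adjoint A y0"
    have "infdist z (dual_cone K) = 0" and bz: "inner b y0 \<le> 0"
      using f0 infdist_nonneg[of z "dual_cone K"] unfolding f_def z_def by (auto simp: max_def split: if_splits)
    hence zd: "z \<in> dual_cone K"
      using in_closed_iff_infdist_zero[OF closed_dual_cone] zero_dual_cone by blast
    have zA: "\<And>v. v \<bullet> z = A v \<bullet> y0"
      unfolding z_def using adjoint_works[OF assms(1)] by simp
    obtain w where "A w = y0" using sj by (metis surjD)
    hence "w \<bullet> z = 1" using zA y0s by (simp add: dot_square_norm)
    hence zn: "z \<noteq> 0" by auto
    obtain e where e: "e > 0" "ball x e \<subseteq> K" using xK mem_interior by blast
    define x' where "x' = x - (e / (2 * norm z)) *\<^sub>R z"
    have nz: "norm z > 0" using zn by simp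
    have "dist x x' = e / 2" using nz e(1) by (simp add: x'_def dist_norm)
    hence "x' \<in> K" using e by auto
    hence "0 \<le> x' \<bullet> z" using zd unfolding dual_cone_def by auto
    moreover have "x \<bullet> z \<le> 0" using zA xb bz by (simp add: inner_commute)
    moreover have "x' \<bullet> z = x \<bullet> z - (e / (2 * norm z)) * (z \<bullet> z)"
      by (simp add: x'_def inner_diff_left)
    moreover have "(e / (2 * norm z)) * (z \<bullet> z) > 0" using e nz by simp
    ultimately show False by linarith
  qed
qed

end
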